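(* Let $\theta:\mathbb{A}\to\mathbb{A}^\lambda$ be a primitive substitution satisfying the standing assumptions, and let $\widetilde\theta:\mathcal{X}\to\mathcal{X}^\lambda$ be its synchronizing part. Then (i) $c(\widetilde\theta)=1$; (ii) $\widetilde\theta$ is primitive; (iii) $h(\widetilde\theta)=1$.
   Context: Substitution $\theta:\mathbb{A}\to\mathbb{A}^\lambda$, $\lambda\ge2$, $\theta(a)=\theta(a)_0\cdots\theta(a)_{\lambda-1}$, iterates $\theta^k$; primitive: some $\theta^k(a)$ contains all letters for every $a$. Standing assumptions: $\theta(a_0)_0=a_0$, $\theta$ injective on letters, subshift infinite. For any primitive substitution $\zeta$ over $\mathbb{B}$: column number $c(\zeta)=\min_{k\ge1,0\le j<\lambda^k}|\{\zeta^k(b)_j:b\in\mathbb{B}\}|$; height $h(\zeta)=\max\{m\ge1:\gcd(m,\lambda)=1,\ m\mid\gcd\{r\ge1:v[r]=v[0]\}\}$ for a fixed point $v$ of a suitable power of $\zeta$. Synchronizing part: $\mathcal{X}$ is the set of $M\subset\mathbb{A}$ with $|M|=c(\theta)$ and $M=\{\theta^k(a)_j:a\in\mathbb{A}\}$ for some $k\ge1$, $0\le j<\lambda^k$. For $M\in\mathcal{X}$ and $0\le j<\lambda$, $\theta(M)_j:=\{\theta(a)_j:a\in M\}$ belongs to $\mathcal{X}$, and $\widetilde\theta(M):=\theta(M)_0\theta(M)_1\cdots\theta(M)_{\lambda-1}$ defines $\widetilde\theta:\mathcal{X}\to\mathcal{X}^\lambda$. *)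

theory Defs
  imports Main
begin

text \<open>A substitution of constant length l over an alphabet B is a map
  zeta :: 'b => nat => 'b, where zeta b j is the j-th letter of zeta(b), j < l.\<close>

definition is_subst :: "'b set \<Rightarrow> ('b \<Rightarrow> nat \<Rightarrow> 'b) \<Rightarrow> nat \<Rightarrow> bool" where
  "is_subst B \<zeta> l \<longleftrightarrow> finite B \<and> B \<noteq> {} \<and> (\<forall>b\<in>B. \<forall>j<l. \<zeta> b j \<in> B)"

text \<open>iter zeta l k b j is the j-th letter (j < l^k) of zeta^k(b).\<close>
fun iter :: "('b \<Rightarrow> nat \<Rightarrow> 'b) \<Rightarrow> nat \<Rightarrow> nat \<Rightarrow> 'b \<Rightarrow> nat \<Rightarrow> 'b" where
  "iter \<zeta> l 0 b j = b"
| "iter \<zeta> l (Suc k) b j = \<zeta> (iter \<zeta> l k b (j div l)) (j mod l)"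

definition primitive :: "'b set \<Rightarrow> ('b \<Rightarrow> nat \<Rightarrow> 'b) \<Rightarrow> nat \<Rightarrow> bool" where
  "primitive B \<zeta> l \<longleftrightarrow> (\<exists>k\<ge>1. \<forall>a\<in>B. \<forall>b\<in>B. \<exists>j<l^k. iter \<zeta> l k a j = b)"

definition column_number :: "'b set \<Rightarrow> ('b \<Rightarrow> nat \<Rightarrow> 'b) \<Rightarrow> nat \<Rightarrow> nat" where
  "column_number B \<zeta> l =
     Min {card ((\<lambda>b. iter \<zeta> l k b j) ` B) | k j. k \<ge> 1 \<and> j < l^k}"

definition fixed_point_pow :: "('b \<Rightarrow> nat \<Rightarrow> 'b) \<Rightarrow> nat \<Rightarrow> nat \<Rightarrow> (nat \<Rightarrow> 'b) \<Rightarrow> bool" where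
  "fixed_point_pow \<zeta> l p v \<longleftrightarrow> (\<forall>n. v n = iter \<zeta> l p (v (n div l^p)) (n mod l^p))"

definition height_of :: "nat \<Rightarrow> (nat \<Rightarrow> 'b) \<Rightarrow> nat" where
  "height_of l v = (GREATEST m. m \<ge> 1 \<and> coprime m l \<and> m dvd Gcd {r. r \<ge> 1 \<and> v r = v 0})"

definition language :: "'b set \<Rightarrow> ('b \<Rightarrow> nat \<Rightarrow> 'b) \<Rightarrow> nat \<Rightarrow> 'b list set" where
  "language B \<zeta> l = {w. \<exists>k a i. a \<in> B \<and> i + length w \<le> l^k \<and>
       w = map (\<lambda>t. iter \<zeta> l k a (i + t)) [0..<length w]}"

definition subshift :: "'b set \<Rightarrow> ('b \<Rightarrow> nat \<Rightarrow> 'b) \<Rightarrow> nat \<Rightarrow> (int \<Rightarrow> 'b) set" where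
  "subshift B \<zeta> l = {x. (\<forall>i. x i \<in> B) \<and>
       (\<forall>i n. map (\<lambda>t. x (i + int t)) [0..<n] \<in> language B \<zeta> l)}"

definition sync_alphabet :: "'a set \<Rightarrow> ('a \<Rightarrow> nat \<Rightarrow> 'a) \<Rightarrow> nat \<Rightarrow> 'a set set" where
  "sync_alphabet A \<theta> l = {M. card M = column_number A \<theta> l \<and>
       (\<exists>k\<ge>1. \<exists>j<l^k. M = (\<lambda>a. iter \<theta> l k a j) ` A)}"

definition sync_subst :: "('a \<Rightarrow> nat \<Rightarrow> 'a) \<Rightarrow> 'a set \<Rightarrow> nat \<Rightarrow> 'a set" where
  "sync_subst \<theta> M j = (\<lambda>a. \<theta> a j) ` M"

end

theory Submission
  imports Defs
begin

lemma iter_add: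
  assumes "l > 0" "j2 < l^k2"
  shows "iter \<zeta> l (k1+k2) b (j1*l^k2 + j2) = iter \<zeta> l k2 (iter \<zeta> l k1 b j1) j2"
  using assms(2)
proof (induction k2 arbitrary: j2)
  case 0
  then show ?case by simp
next
  case (Suc k2)
  have r: "j1*l^(Suc k2)+j2 = j2 + (j1*l^k2)*l" by (simp add: algebra_simps)
  have e1: "(j1*l^(Suc k2) + j2) div l = j1*l^k2 + j2 div l"
    unfolding r using assms(1) by simp
  have e2: "(j1*l^(Suc k2) + j2) mod l = j2 mod l"
    unfolding r by simp
  have b: "j2 div l < l^k2" using Suc.prems assms(1)
    by (simp add: div_less_iff_less_mult mult.commute)
  show ?case using Suc.IH[OF b] e1 e2 by simp
qed

lemma iter_in:
  assumes "is_subst B \<zeta> l" "l > 0" "b \<in> B"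
  shows "iter \<zeta> l k b j \<in> B"
  using assms(3)
proof (induction k arbitrary: j)
  case 0 then show ?case by simp
next
  case (Suc k)
  then show ?case using assms(1,2) unfolding is_subst_def by simp
qed

lemma iter_sync: "iter (sync_subst \<theta>) l k M j = (\<lambda>a. iter \<theta> l k a j) ` M"
proof (induction k arbitrary: j)
  case 0 then show ?case by simp
next
  case (Suc k)
  then show ?case by (simp add: sync_subst_def image_image)
qed

lemma cards_finite:
  assumes "finite B"
  shows "finite {card ((\<lambda>b. iter \<zeta> l k b j) ` B) | k j. k \<ge> 1 \<and> j < l^k}"
proof (rule finite_subset[of _ "{..card B}"])
  show "{card ((\<lambda>b. iter \<zeta> l k b j) ` B) | k j. k \<ge> 1 \<and> j < l^k} \<subseteq> {..card B}"
    using card_image_le[OF assms] by auto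
qed simp

lemma cn_le:
  assumes "finite B" "k \<ge> 1" "j < l^k"
  shows "column_number B \<zeta> l \<le> card ((\<lambda>b. iter \<zeta> l k b j) ` B)"
  unfolding column_number_def
  by (rule Min_le[OF cards_finite[OF assms(1)]]) (use assms in blast)

lemma cn_in:
  assumes "finite B" "l > 0"
  shows "\<exists>k j. k \<ge> 1 \<and> j < l^k \<and> column_number B \<zeta> l = card ((\<lambda>b. iter \<zeta> l k b j) ` B)"
proof -
  have ne: "{card ((\<lambda>b. iter \<zeta> l k b j) ` B) | k j. k \<ge> 1 \<and> j < l^k} \<noteq> {}"
    using assms(2) by force
  have "column_number B \<zeta> l \<in> {card ((\<lambda>b. iter \<zeta> l k b j) ` B) | k j. k \<ge> 1 \<and> j < l^k}"
    unfolding column_number_def by (rule Min_in[OF cards_finite[OF assms(1)] ne])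
  then show ?thesis by blast
qed

lemma pos_bound:
  fixes j l :: nat
  assumes "j < l^k" "j' < l^k'"
  shows "j*l^k' + j' < l^(k+k')"
proof -
  have "j*l^k' + j' < (j+1)*l^k'" using assms(2) by (simp add: distrib_right)
  also have "\<dots> \<le> l^k * l^k'" using assms(1) by (intro mult_right_mono) auto
  finally show ?thesis by (simp add: power_add)
qed

lemma col_le:
  assumes "is_subst A \<theta> l" "l > 0" "M \<in> sync_alphabet A \<theta> l" "j' < l^k'"
  shows "column_number A \<theta> l \<le> card ((\<lambda>a. iter \<theta> l k' a j') ` M)"
proof -
  obtain k j where k: "k \<ge> 1" "j < l^k" and M: "M = (\<lambda>a. iter \<theta> l k a j) ` A"
    using assms(3) unfolding sync_alphabet_def by blast
  have "(\<lambda>a. iter \<theta> l k' a j') ` M = (\<lambda>a. iter \<theta> l (k+k') a (j*l^k'+j')) ` A"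
    unfolding M image_image using iter_add[OF assms(2) assms(4), of \<theta> k, symmetric] by simp
  moreover have "column_number A \<theta> l \<le> card ((\<lambda>a. iter \<theta> l (k+k') a (j*l^k'+j')) ` A)"
    apply (rule cn_le)
    using assms(1) k pos_bound[OF k(2) assms(4)] unfolding is_subst_def by auto
  ultimately show ?thesis by simp
qed

lemma sync_sub:
  assumes "is_subst A \<theta> l" "l > 0" "M \<in> sync_alphabet A \<theta> l"
  shows "M \<subseteq> A"
  using assms iter_in[OF assms(1,2)] unfolding sync_alphabet_def by auto

lemma sync_eq:
  assumes "is_subst A \<theta> l" "S \<subseteq> A"
    "column_number A \<theta> l \<le> card ((\<lambda>a. iter \<theta> l k a j) ` S)"
    "N = (\<lambda>a. iter \<theta> l k a j) ` A" "card N = column_number A \<theta> l"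
  shows "(\<lambda>a. iter \<theta> l k a j) ` S = N"
proof -
  have f: "finite N" using assms(1,4) unfolding is_subst_def by simp
  have "(\<lambda>a. iter \<theta> l k a j) ` S \<subseteq> N" using assms(2,4) by auto
  moreover have "card ((\<lambda>a. iter \<theta> l k a j) ` S) \<le> card N" using calculation card_mono[OF f] by blast
  ultimately show ?thesis using card_subset_eq[OF f] assms(3,5) by simp
qed

theorem mainTheorem11:
  fixes A :: "'a set" and \<theta> :: "'a \<Rightarrow> nat \<Rightarrow> 'a" and l :: nat and a0 :: 'a
  assumes "is_subst A \<theta> l"
    and "l \<ge> 2"
    and "primitive A \<theta> l"
    and "a0 \<in> A" and "\<theta> a0 0 = a0"
    and "\<forall>a\<in>A. \<forall>b\<in>A. (\<forall>j<l. \<theta> a j = \<theta> b j) \<longrightarrow> a = b"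
    and "infinite (subshift A \<theta> l)"
  shows "column_number (sync_alphabet A \<theta> l) (sync_subst \<theta>) l = 1
    \<and> primitive (sync_alphabet A \<theta> l) (sync_subst \<theta>) l
    \<and> (\<forall>p\<ge>1. \<forall>v. (\<forall>n. v n \<in> sync_alphabet A \<theta> l) \<longrightarrow>
          fixed_point_pow (sync_subst \<theta>) l p v \<longrightarrow> height_of l v = 1)"
proof -
  define X where "X = sync_alphabet A \<theta> l"
  define c where "c = column_number A \<theta> l"
  have sub: "is_subst A \<theta> l" by fact
  have l0: "l > 0" using assms(2) by simp
  have finA: "finite A" using sub unfolding is_subst_def by simp
  have XA: "\<And>M. M \<in> X \<Longrightarrow> M \<subseteq> A" using sync_sub[OF sub l0] unfolding X_def by blast
  have finX: "finite X" using XA finA by (meson Pow_iff finite_Pow_iff finite_subset subsetI)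
  have colle: "\<And>M k j. M \<in> X \<Longrightarrow> j < l^k \<Longrightarrow> c \<le> card ((\<lambda>a. iter \<theta> l k a j) ` M)"
    using col_le[OF sub l0] unfolding X_def c_def by blast
  have Xd: "\<And>N. N \<in> X \<longleftrightarrow> card N = c \<and> (\<exists>k\<ge>1. \<exists>j<l^k. N = (\<lambda>a. iter \<theta> l k a j) ` A)"
    unfolding X_def c_def sync_alphabet_def by simp
  have synch: "\<And>M k j. M \<in> X \<Longrightarrow> (\<lambda>a. iter \<theta> l k a j) ` A \<in> X \<Longrightarrow> j < l^k \<Longrightarrow>
      (\<lambda>a. iter \<theta> l k a j) ` M = (\<lambda>a. iter \<theta> l k a j) ` A"
  proof -
    fix M k j assume M: "M \<in> X" and N: "(\<lambda>a. iter \<theta> l k a j) ` A \<in> X" and j: "j < l^k"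
    show "(\<lambda>a. iter \<theta> l k a j) ` M = (\<lambda>a. iter \<theta> l k a j) ` A"
      apply (rule sync_eq[OF sub XA[OF M]])
      using colle[OF M j] N Xd unfolding c_def by auto
  qed
  obtain k0 j0 where k0: "k0 \<ge> 1" "j0 < l^k0" and c0: "c = card ((\<lambda>a. iter \<theta> l k0 a j0) ` A)"
    using cn_in[OF finA l0, of \<theta>] unfolding c_def by blast
  define M0 where "M0 = (\<lambda>a. iter \<theta> l k0 a j0) ` A"
  have M0X: "M0 \<in> X" using Xd k0 c0 M0_def by auto
  have part1: "column_number X (sync_subst \<theta>) l = 1"
    unfolding column_number_def
  proof (rule Min_eqI[OF cards_finite[OF finX]])
    fix y assume "y \<in> {card ((\<lambda>b. iter (sync_subst \<theta>) l k b j) ` X) | k j. 1 \<le> k \<and> j < l ^ k}"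
    then obtain k j where y: "y = card ((\<lambda>b. iter (sync_subst \<theta>) l k b j) ` X)" by blast
    have "(\<lambda>b. iter (sync_subst \<theta>) l k b j) ` X \<noteq> {}" using M0X by blast
    then show "1 \<le> y" unfolding y using finX
      by (simp add: Suc_leI card_gt_0_iff)
  next
    have "(\<lambda>b. iter (sync_subst \<theta>) l k0 b j0) ` X = {M0}"
      using M0X synch[OF _ _ k0(2)] unfolding iter_sync M0_def by auto
    then have "card ((\<lambda>b. iter (sync_subst \<theta>) l k0 b j0) ` X) = 1" by simp
    then show "1 \<in> {card ((\<lambda>b. iter (sync_subst \<theta>) l k b j) ` X) | k j. 1 \<le> k \<and> j < l ^ k}"
      using k0 by (intro CollectI exI[of _ k0] exI[of _ j0]) simp
  qed
  have "\<forall>N\<in>X. \<exists>p. fst p \<ge> 1 \<and> snd p < l^fst p \<and> N = (\<lambda>a. iter \<theta> l (fst p) a (snd p)) ` A"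
    using Xd by fastforce
  then obtain f where f: "\<And>N. N \<in> X \<Longrightarrow> fst (f N) \<ge> 1 \<and> snd (f N) < l^fst (f N) \<and>
      N = (\<lambda>a. iter \<theta> l (fst (f N)) a (snd (f N))) ` A"
    by metis
  define K where "K = Suc (Max ((fst \<circ> f) ` X))"
  have part2: "primitive X (sync_subst \<theta>) l"
    unfolding primitive_def
  proof (rule exI[of _ K], intro conjI ballI)
    show "1 \<le> K" unfolding K_def by simp
    fix M N assume M: "M \<in> X" and N: "N \<in> X"
    define kN where "kN = fst (f N)"
    define jN where "jN = snd (f N)"
    have kN: "kN \<ge> 1" "jN < l^kN" "N = (\<lambda>a. iter \<theta> l kN a jN) ` A"
      using f[OF N] unfolding kN_def jN_def by auto
    have "kN \<le> Max ((fst \<circ> f) ` X)" using N finX unfolding kN_def by simp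
    then have KN: "K = (K - kN) + kN" "kN < K" unfolding K_def by auto
    have "l^kN \<le> l^K" using KN(2) l0 by (intro power_increasing) auto
    then have jK: "jN < l^K" using kN(2) by linarith
    define S where "S = (\<lambda>a. iter \<theta> l (K - kN) a 0) ` M"
    have eq: "(\<lambda>a. iter \<theta> l K a jN) ` M = (\<lambda>a. iter \<theta> l kN a jN) ` S"
    proof -
      have "\<And>a. iter \<theta> l K a jN = iter \<theta> l kN (iter \<theta> l (K - kN) a 0) jN"
        using iter_add[OF l0 kN(2), of \<theta> "K - kN" _ 0] KN(1) by simp
      then show ?thesis unfolding S_def image_image by simp
    qed
    have SA: "S \<subseteq> A" using XA[OF M] iter_in[OF sub l0] unfolding S_def by auto
    have "(\<lambda>a. iter \<theta> l kN a jN) ` S = N"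
      apply (rule sync_eq[OF sub SA])
      using colle[OF M jK] eq kN(3) Xd N unfolding c_def by auto
    then show "\<exists>j<l ^ K. iter (sync_subst \<theta>) l K M j = N"
      using jK eq unfolding iter_sync by blast
  qed
  have part3: "\<forall>p\<ge>1. \<forall>v. (\<forall>n. v n \<in> X) \<longrightarrow>
          fixed_point_pow (sync_subst \<theta>) l p v \<longrightarrow> height_of l v = 1"
  proof (intro allI impI)
    fix p v assume p: "p \<ge> (1::nat)" and vX: "\<forall>n. v n \<in> X"
      and fp: "fixed_point_pow (sync_subst \<theta>) l p v"
    have fp': "\<And>n. v n = iter (sync_subst \<theta>) l p (v (n div l^p)) (n mod l^p)"
      using fp unfolding fixed_point_pow_def by blast
    have pw: "n < l^(p*Suc q) \<Longrightarrow> v n = iter (sync_subst \<theta>) l (p*Suc q) (v 0) n" for q n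
    proof (induction q arbitrary: n)
      case 0
      then have "n div l^p = 0" by simp
      then show ?case using fp'[of n] 0 by simp
    next
      case (Suc q)
      have lt: "n div l^p < l^(p*Suc q)" using Suc.prems
        by (simp add: div_less_iff_less_mult power_add[symmetric] l0 algebra_simps)
      have ml: "n mod l^p < l^p" using l0 by simp
      have "v n = iter (sync_subst \<theta>) l p (iter (sync_subst \<theta>) l (p*Suc q) (v 0) (n div l^p)) (n mod l^p)"
        using fp'[of n] Suc.IH[OF lt] by simp
      also have "\<dots> = iter (sync_subst \<theta>) l (p*Suc q + p) (v 0) ((n div l^p) * l^p + n mod l^p)"
        using iter_add[OF l0 ml, symmetric] by simp
      also have "\<dots> = iter (sync_subst \<theta>) l (p*Suc (Suc q)) (v 0) n"
        by (simp add: algebra_simps)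
      finally show ?case .
    qed
    have v0: "v 0 \<in> X" using vX by blast
    define kw where "kw = fst (f (v 0))"
    define jw where "jw = snd (f (v 0))"
    have kw: "kw \<ge> 1" "jw < l^kw" "v 0 = (\<lambda>a. iter \<theta> l kw a jw) ` A"
      using f[OF v0] unfolding kw_def jw_def by auto
    define K2 where "K2 = p * Suc (Suc kw)"
    have K2: "K2 = (K2 - kw) + kw" "K2 - kw \<ge> 2"
    proof -
      have "K2 \<ge> Suc (Suc kw)" unfolding K2_def using mult_le_mono1[OF p, of "Suc (Suc kw)"] by (simp only: mult_1)
      then show "K2 = (K2 - kw) + kw" "K2 - kw \<ge> 2" by auto
    qed
    have big: "(2::nat) < l^(K2 - kw)"
    proof -
      have "(2::nat) < 2^2" by simp
      also have "(2::nat)^2 \<le> l^2" using power_mono[OF assms(2), of 2] by simp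
      also have "l^2 \<le> l^(K2 - kw)" using K2(2) l0 assms(2) by (simp add: power_increasing)
      finally show ?thesis .
    qed
    have ret: "v (i*l^kw + jw) = v 0" if i: "i \<le> 2" for i
    proof -
      have il: "i < l^(K2 - kw)" using i big by simp
      have rb: "i*l^kw + jw < l^K2" using pos_bound[OF il kw(2)] K2(1) by simp
      have e1: "v (i*l^kw + jw) = (\<lambda>a. iter \<theta> l K2 a (i*l^kw + jw)) ` (v 0)"
        using pw[of "i*l^kw + jw" "Suc kw"] rb unfolding iter_sync K2_def by simp
      have e2: "(\<lambda>a. iter \<theta> l K2 a (i*l^kw + jw)) ` (v 0) = (\<lambda>a. iter \<theta> l kw a jw) ` ((\<lambda>a. iter \<theta> l (K2 - kw) a i) ` (v 0))"
      proof -
        have "\<And>a. iter \<theta> l K2 a (i*l^kw + jw) = iter \<theta> l kw (iter \<theta> l (K2 - kw) a i) jw"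
          using iter_add[OF l0 kw(2), of \<theta> "K2 - kw" _ i] K2(1) by simp
        then show ?thesis unfolding image_image by simp
      qed
      have SA: "(\<lambda>a. iter \<theta> l (K2 - kw) a i) ` (v 0) \<subseteq> A"
        using XA[OF v0] iter_in[OF sub l0] by auto
      have cl: "column_number A \<theta> l \<le> card ((\<lambda>a. iter \<theta> l kw a jw) ` ((\<lambda>a. iter \<theta> l (K2 - kw) a i) ` (v 0)))"
        using colle[OF v0 rb] e2 unfolding c_def by simp
      have cw: "card ((\<lambda>a. iter \<theta> l kw a jw) ` A) = column_number A \<theta> l"
        using Xd v0 kw(3) unfolding c_def by metis
      have e3: "(\<lambda>a. iter \<theta> l kw a jw) ` ((\<lambda>a. iter \<theta> l (K2 - kw) a i) ` (v 0)) = (\<lambda>a. iter \<theta> l kw a jw) ` A"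
        by (rule sync_eq[OF sub SA cl refl cw])
      show ?thesis using e1 e2 e3 kw(3) by simp
    qed
    define R where "R = {r. r \<ge> 1 \<and> v r = v 0}"
    have r1: "1*l^kw + jw \<in> R" using ret[of 1] l0 unfolding R_def by (simp add: Suc_leI)
    have r2: "2*l^kw + jw \<in> R" using ret[of 2] l0 unfolding R_def by (simp add: Suc_leI)
    have gd: "Gcd R dvd l^kw"
    proof -
      have "Gcd R dvd 2*l^kw + jw - (1*l^kw + jw)"
        by (rule dvd_diff_nat[OF Gcd_dvd[OF r2] Gcd_dvd[OF r1]])
      then show ?thesis by simp
    qed
    show "height_of l v = 1"
      unfolding height_of_def R_def[symmetric]
    proof (rule Greatest_equality)
      show "(1::nat) \<ge> 1 \<and> coprime 1 l \<and> 1 dvd Gcd R" by simp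
    next
      fix m assume m: "m \<ge> 1 \<and> coprime m l \<and> m dvd Gcd R"
      then have "m dvd l^kw" using gd dvd_trans by blast
      moreover have "coprime m (l^kw)" using m by simp
      ultimately have "m dvd 1" using coprime_common_divisor[of m "l^kw" m] by simp
      then show "m \<le> 1" by simp
    qed
  qed
  show ?thesis using part1 part2 part3 unfolding X_def by blast
qed

end
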